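(* Let $G=(V,E)$ be a graph on $V=\{v_1,\dots,v_N\}$ ($N\ge 3$) with edge weights $w:E\to\mathbb{R}$, and let $\pi^\star=(v_1,\dots,v_N)$ be the ground-truth order, whose "true edges" are $(v_k,v_{k+1})$, $1\le k\le N-1$. Assume: (A1) for every internal vertex $v_i$ ($2\le i\le N-1$), its two true incident edges $e_i^-=(v_{i-1},v_i)$ and $e_i^+=(v_i,v_{i+1})$ belong to $E$ and have maximum weight among all edges of $E$ incident to $v_i$; (A2) there exists $\Delta>0$ such that for every internal vertex $v_i$ and every non-true edge $(v_i,u)\in E$, $w(e_i^-)\ge w(v_i,u)+\Delta$ and $w(e_i^+)\ge w(v_i,u)+\Delta$. Let $C=(v_i,v_{i+1},\dots,v_j)$ with $1\le i<j\le N$ be a contiguous substring of $\pi^\star$, and call an edge "used" if it is one of $(v_k,v_{k+1})$ with $i\le k<j$ and "unused" otherwise. Then: if $i\ge 2$, among the unused edges of $E$ incident to $v_i$ the heaviest is uniquely the true boundary edge $(v_{i-1},v_i)$; and if $j\le N-1$, among the unused edges of $E$ incident to $v_j$ the heaviest is uniquely the true boundary edge $(v_j,v_{j+1})$.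
   Context: A "contiguous substring" of $\pi^\star$ is a chain $(v_i,\dots,v_j)$ of consecutive vertices in the true order; its internal edges are the used edges. A non-true edge is any edge of $E$ not of the form $(v_k,v_{k+1})$. *)

theory Defs
  imports Complex_Main
begin

(* Vertices v_1..v_N are represented by the naturals 1..N; the ground-truth order is 1,2,...,N.
   The graph is simple undirected: an edge is a two-element set {a,b} of vertices. *)

definition simple_graph_on :: "nat \<Rightarrow> nat set set \<Rightarrow> bool" where
  "simple_graph_on N E \<longleftrightarrow> (\<forall>e\<in>E. \<exists>a b. e = {a,b} \<and> a \<noteq> b \<and> a \<in> {1..N} \<and> b \<in> {1..N})"

definition true_edge :: "nat \<Rightarrow> nat set \<Rightarrow> bool" where
  "true_edge N e \<longleftrightarrow> (\<exists>k. 1 \<le> k \<and> k \<le> N - 1 \<and> e = {k, Suc k})"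

definition incident :: "nat set set \<Rightarrow> nat \<Rightarrow> nat set set" where
  "incident E v = {e \<in> E. v \<in> e}"

definition used_edge :: "nat \<Rightarrow> nat \<Rightarrow> nat set \<Rightarrow> bool" where
  "used_edge i j e \<longleftrightarrow> (\<exists>k. i \<le> k \<and> k < j \<and> e = {k, Suc k})"

definition unique_heaviest :: "(nat set \<Rightarrow> real) \<Rightarrow> nat set set \<Rightarrow> nat set \<Rightarrow> bool" where
  "unique_heaviest w S e \<longleftrightarrow> e \<in> S \<and> (\<forall>e'\<in>S. e' \<noteq> e \<longrightarrow> w e' < w e)"

end

theory Submission
  imports Defs
begin

lemma edge_form:
  assumes "simple_graph_on N E" "e \<in> E" "v \<in> e"
  shows "\<exists>u. e = {v,u} \<and> u \<noteq> v"
  using assms unfolding simple_graph_on_def by fastforce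

lemma true_nbr:
  assumes "true_edge N {v,u}" "u \<noteq> v" "1 \<le> v"
  shows "{v,u} = {v - 1, v} \<or> {v,u} = {v, v+1}"
proof -
  obtain k where k: "{v,u} = {k, Suc k}" using assms(1) unfolding true_edge_def by blast
  then have "(v = k \<and> u = Suc k) \<or> (v = Suc k \<and> u = k)"
    by (metis doubleton_eq_iff)
  then show ?thesis using assms by (auto simp: insert_commute)
qed

theorem mainTheorem2:
  fixes N :: nat and E :: "nat set set" and w :: "nat set \<Rightarrow> real" and i j :: nat
  assumes N3: "N \<ge> 3"
    and G: "simple_graph_on N E"
    and A1: "\<forall>v. 2 \<le> v \<and> v \<le> N - 1 \<longrightarrow>
               {v - 1, v} \<in> E \<and> {v, v + 1} \<in> E \<and>
               (\<forall>e\<in>incident E v. w e \<le> w {v - 1, v} \<and> w e \<le> w {v, v + 1})"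
    and A2: "\<exists>\<Delta>>0. \<forall>v u. 2 \<le> v \<and> v \<le> N - 1 \<and> {v, u} \<in> E \<and> \<not> true_edge N {v, u} \<longrightarrow>
               w {v - 1, v} \<ge> w {v, u} + \<Delta> \<and> w {v, v + 1} \<ge> w {v, u} + \<Delta>"
    and ij: "1 \<le> i" "i < j" "j \<le> N"
  shows "(2 \<le> i \<longrightarrow>
           unique_heaviest w {e \<in> incident E i. \<not> used_edge i j e} {i - 1, i})
       \<and> (j \<le> N - 1 \<longrightarrow>
           unique_heaviest w {e \<in> incident E j. \<not> used_edge i j e} {j, j + 1})"
proof -
  obtain D where D: "D > 0" and DD: "\<And>v u. 2 \<le> v \<Longrightarrow> v \<le> N - 1 \<Longrightarrow> {v, u} \<in> E \<Longrightarrow> \<not> true_edge N {v, u} \<Longrightarrow>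
               w {v - 1, v} \<ge> w {v, u} + D \<and> w {v, v + 1} \<ge> w {v, u} + D"
    using A2 by blast
  have P1: "unique_heaviest w {e \<in> incident E i. \<not> used_edge i j e} {i - 1, i}" if i2: "2 \<le> i"
  proof -
    have iN: "i \<le> N - 1" using ij by simp
    have inE: "{i - 1, i} \<in> E" using A1 i2 iN by blast
    have nu: "\<not> used_edge i j {i - 1, i}"
      unfolding used_edge_def using i2 by (auto simp: doubleton_eq_iff)
    have used: "used_edge i j {i, i+1}" unfolding used_edge_def using ij by auto
    show ?thesis unfolding unique_heaviest_def incident_def
    proof (intro conjI ballI impI)
      show "{i - 1, i} \<in> {e \<in> {e \<in> E. i \<in> e}. \<not> used_edge i j e}" using inE nu by auto
    next
      fix e assume e: "e \<in> {e \<in> {e \<in> E. i \<in> e}. \<not> used_edge i j e}" and ne: "e \<noteq> {i - 1, i}"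
      then obtain u where u: "e = {i,u}" "u \<noteq> i" using edge_form[OF G] by blast
      have ne2: "e \<noteq> {i, i+1}" using e used by auto
      have "\<not> true_edge N {i,u}" using true_nbr[of N i u] u ne ne2 ij by auto
      then have "w {i - 1, i} \<ge> w e + D" using DD[of i u] i2 iN e u by auto
      then show "w e < w {i - 1, i}" using D by linarith
    qed
  qed
  have P2: "unique_heaviest w {e \<in> incident E j. \<not> used_edge i j e} {j, j + 1}" if jN: "j \<le> N - 1"
  proof -
    have j2: "2 \<le> j" using ij by simp
    have inE: "{j, j+1} \<in> E" using A1 j2 jN by blast
    have nu: "\<not> used_edge i j {j, j+1}"
      unfolding used_edge_def by (auto simp: doubleton_eq_iff)
    have used: "used_edge i j {j - 1, j}" unfolding used_edge_def using ij
      by (intro exI[of _ "j - 1"]) auto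
    show ?thesis unfolding unique_heaviest_def incident_def
    proof (intro conjI ballI impI)
      show "{j, j+1} \<in> {e \<in> {e \<in> E. j \<in> e}. \<not> used_edge i j e}" using inE nu by auto
    next
      fix e assume e: "e \<in> {e \<in> {e \<in> E. j \<in> e}. \<not> used_edge i j e}" and ne: "e \<noteq> {j, j+1}"
      then obtain u where u: "e = {j,u}" "u \<noteq> j" using edge_form[OF G] by blast
      have ne2: "e \<noteq> {j - 1, j}" using e used by auto
      have "\<not> true_edge N {j,u}" using true_nbr[of N j u] u ne ne2 j2 by auto
      then have "w {j, j+1} \<ge> w e + D" using DD[of j u] j2 jN e u by auto
      then show "w e < w {j, j+1}" using D by linarith
    qed
  qed
  show ?thesis using P1 P2 by blast
qed

end
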